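(* Let $X$ be a real random variable with cumulative distribution function $F$, $\bar F=1-F$, and assume there exists $\epsilon>0$ with $\mathbb{E}[e^{(1+\epsilon)X}]<\infty$. Let $c(k)=\int_k^\infty(e^x-e^k)\,dF(x)$. If $-\log\bar F\in R_\alpha$ for some $\alpha\ge1$, then $-\log c\in R_\alpha$ and, as $k\to\infty$, $$-\log c(k)\sim -k-\log\bar F(k).$$
   Context: A measurable function $g$, positive for large $x$, is in $R_\alpha$ (regularly varying at $+\infty$ with index $\alpha$) if $\lim_{x\to\infty}g(\lambda x)/g(x)=\lambda^\alpha$ for every $\lambda>0$. $g\sim h$ means $g(k)/h(k)\to1$ as $k\to\infty$. *)

theory Defs
  imports "HOL-Probability.Probability"
begin

definition regvar :: "(real \<Rightarrow> real) \<Rightarrow> real \<Rightarrow> bool" where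
  "regvar g a \<longleftrightarrow> g \<in> borel_measurable borel \<and> (\<forall>\<^sub>F x in at_top. g x > 0) \<and>
     (\<forall>l>0. ((\<lambda>x. g (l * x) / g x) \<longlongrightarrow> l powr a) at_top)"

definition asym_eq :: "(real \<Rightarrow> real) \<Rightarrow> (real \<Rightarrow> real) \<Rightarrow> bool" where
  "asym_eq g h \<longleftrightarrow> ((\<lambda>k. g k / h k) \<longlongrightarrow> 1) at_top"

definition cdfX :: "'a measure \<Rightarrow> ('a \<Rightarrow> real) \<Rightarrow> real \<Rightarrow> real" where
  "cdfX M X x = measure M {w \<in> space M. X w \<le> x}"

definition tailX :: "'a measure \<Rightarrow> ('a \<Rightarrow> real) \<Rightarrow> real \<Rightarrow> real" where
  "tailX M X x = 1 - cdfX M X x"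

definition callX :: "'a measure \<Rightarrow> ('a \<Rightarrow> real) \<Rightarrow> real \<Rightarrow> real" where
  "callX M X k = (\<integral>w. (if X w > k then exp (X w) - exp k else 0) \<partial>M)"

end

theory Submission
  imports Defs
begin


lemma tail_eq:
  assumes P: "prob_space M" and Xm: "X \<in> borel_measurable M"
  shows "tailX M X x = measure M {w\<in>space M. X w > x}"
proof -
  interpret prob_space M by fact
  have "{w\<in>space M. X w > x} = space M - {w\<in>space M. X w \<le> x}" by auto
  moreover have "{w\<in>space M. X w \<le> x} \<in> sets M" using Xm by measurable
  ultimately show ?thesis unfolding tailX_def cdfX_def using prob_compl by simp
qed

lemma tail_anti:
  assumes P: "prob_space M" and Xm: "X \<in> borel_measurable M" and "x \<le> y"
  shows "tailX M X y \<le> tailX M X x"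
proof -
  interpret prob_space M by fact
  have "measure M {w\<in>space M. X w > y} \<le> measure M {w\<in>space M. X w > x}"
    by (rule finite_measure_mono) (use assms in \<open>auto, measurable\<close>)
  thus ?thesis using tail_eq[OF P Xm] by simp
qed

lemma tail_markov:
  assumes P: "prob_space M" and Xm: "X \<in> borel_measurable M" and e: "e > 0"
    and int: "integrable M (\<lambda>w. exp ((1 + e) * X w))"
  shows "tailX M X x \<le> (\<integral>w. exp ((1 + e) * X w) \<partial>M) * exp (-(1+e)*x)"
proof -
  interpret prob_space M by fact
  let ?A = "{w\<in>space M. X w > x}"
  have A: "?A \<in> sets M" using Xm by measurable
  have "tailX M X x = (\<integral>w. indicator ?A w \<partial>M)" using tail_eq[OF P Xm] A by simp
  also have "\<dots> \<le> (\<integral>w. exp ((1 + e) * X w) * exp (-(1+e)*x) \<partial>M)"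
  proof (rule integral_mono)
    show "integrable M (indicator ?A :: _ \<Rightarrow> real)" using A by (intro integrable_real_indicator) (auto simp: emeasure_eq_measure)
    show "integrable M (\<lambda>w. exp ((1 + e) * X w) * exp (-(1+e)*x))" using int by simp
    fix w assume "w \<in> space M"
    have "exp ((1 + e) * X w) * exp (-(1+e)*x) = exp ((1+e)*(X w - x))"
      by (simp add: exp_add[symmetric] algebra_simps)
    moreover have "X w > x \<Longrightarrow> 1 \<le> exp ((1+e)*(X w - x))" using e by simp
    ultimately show "indicator ?A w \<le> exp ((1 + e) * X w) * exp (-(1+e)*x)"
      by (auto simp: indicator_def)
  qed
  also have "\<dots> = (\<integral>w. exp ((1 + e) * X w) \<partial>M) * exp (-(1+e)*x)" by simp
  finally show ?thesis .
qed

lemma call_integrable: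
  fixes X :: "'a \<Rightarrow> real"
  assumes P: "prob_space M" and Xm: "X \<in> borel_measurable M" and e: "e > 0"
    and int: "integrable M (\<lambda>w. exp ((1 + e) * X w))"
  shows "integrable M (\<lambda>w. if X w > k then exp (X w) - exp k else 0)"
proof -
  interpret prob_space M by fact
  have I: "integrable M (\<lambda>w. 1 + exp ((1 + e) * X w))" using int by simp
  show ?thesis
  proof (rule Bochner_Integration.integrable_bound[OF I])
  show "(\<lambda>w. if X w > k then exp (X w) - exp k else 0) \<in> borel_measurable M" using Xm by measurable
  show "AE w in M. norm (if X w > k then exp (X w) - exp k else 0) \<le> norm (1 + exp ((1 + e) * X w))"
  proof (rule AE_I2)
    fix w
    have "exp (X w) \<le> 1 + exp ((1 + e) * X w)"
    proof (cases "X w \<le> 0")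
      case True thus ?thesis by (smt (verit) exp_le_one_iff exp_gt_zero)
    next
      case False thus ?thesis using e by (smt (verit) exp_gt_zero exp_le_cancel_iff mult_le_cancel_right1)
    qed
    thus "norm (if X w > k then exp (X w) - exp k else 0) \<le> norm (1 + exp ((1 + e) * X w))"
      by (smt (verit) exp_gt_zero exp_less_cancel_iff norm_of_real real_norm_def)
  qed
  qed
qed

lemma call_lower:
  fixes X :: "'a \<Rightarrow> real"
  assumes P: "prob_space M" and Xm: "X \<in> borel_measurable M" and e: "e > 0"
    and int: "integrable M (\<lambda>w. exp ((1 + e) * X w))" and ky: "k \<le> y"
  shows "(exp y - exp k) * tailX M X y \<le> callX M X k"
proof -
  interpret prob_space M by fact
  let ?A = "{w\<in>space M. X w > y}"
  have A: "?A \<in> sets M" using Xm by measurable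
  have "(exp y - exp k) * tailX M X y = (\<integral>w. (exp y - exp k) * indicator ?A w \<partial>M)"
    using tail_eq[OF P Xm] A by simp
  also have "\<dots> \<le> callX M X k" unfolding callX_def
  proof (rule integral_mono)
    show "integrable M (\<lambda>w. (exp y - exp k) * indicator ?A w)" using A
      by (intro integrable_mult_right integrable_real_indicator) (auto simp: emeasure_eq_measure)
    show "integrable M (\<lambda>w. if X w > k then exp (X w) - exp k else 0)"
      by (rule call_integrable[OF P Xm e int])
    fix w assume "w \<in> space M"
    show "(exp y - exp k) * indicator ?A w \<le> (if X w > k then exp (X w) - exp k else 0)"
      using ky \<open>w \<in> space M\<close> by (auto simp: indicator_def)
  qed
  finally show ?thesis .
qed

lemma call_anti:
  fixes X :: "'a \<Rightarrow> real"
  assumes P: "prob_space M" and Xm: "X \<in> borel_measurable M" and e: "e > 0"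
    and int: "integrable M (\<lambda>w. exp ((1 + e) * X w))" and ky: "k \<le> y"
  shows "callX M X y \<le> callX M X k"
  unfolding callX_def
proof (rule integral_mono)
  show "integrable M (\<lambda>w. if X w > k then exp (X w) - exp k else 0)"
    by (rule call_integrable[OF P Xm e int])
  show "integrable M (\<lambda>w. if X w > y then exp (X w) - exp y else 0)"
    by (rule call_integrable[OF P Xm e int])
  fix w
  show "(if X w > y then exp (X w) - exp y else 0) \<le> (if X w > k then exp (X w) - exp k else 0)"
    using ky by auto
qed

lemma call_upper:
  fixes X :: "'a \<Rightarrow> real"
  assumes P: "prob_space M" and Xm: "X \<in> borel_measurable M" and e: "e > 0"
    and int: "integrable M (\<lambda>w. exp ((1 + e) * X w))"
  shows "callX M X k \<le> (\<Sum>n<N. exp (k + real n + 1) * tailX M X (k + real n))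
           + exp (-e * (k + real N)) * (\<integral>w. exp ((1 + e) * X w) \<partial>M)"
proof -
  interpret prob_space M by fact
  define A where "A n = {w\<in>space M. X w > k + real n}" for n
  have A: "A n \<in> sets M" for n using Xm unfolding A_def by measurable
  have IA: "integrable M (\<lambda>w. exp (k + real n + 1) * indicator (A n) w)" for n
    using A by (intro integrable_mult_right integrable_real_indicator) (auto simp: emeasure_eq_measure)
  have "callX M X k \<le> (\<integral>w. (\<Sum>n<N. exp (k + real n + 1) * indicator (A n) w)
           + exp (-e * (k + real N)) * exp ((1 + e) * X w) \<partial>M)"
    unfolding callX_def
  proof (rule integral_mono)
    show "integrable M (\<lambda>w. if X w > k then exp (X w) - exp k else 0)"
      by (rule call_integrable[OF P Xm e int])
    show "integrable M (\<lambda>w. (\<Sum>n<N. exp (k + real n + 1) * indicator (A n) w)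
           + exp (-e * (k + real N)) * exp ((1 + e) * X w))"
      using IA int by (intro Bochner_Integration.integrable_add integrable_mult_right Bochner_Integration.integrable_sum) auto
    fix w assume w: "w \<in> space M"
    have S0: "0 \<le> (\<Sum>n<N. exp (k + real n + 1) * indicator (A n) w)"
      by (intro sum_nonneg) auto
    have E0: "0 \<le> exp (-e * (k + real N)) * exp ((1 + e) * X w)" by simp
    show "(if X w > k then exp (X w) - exp k else 0) \<le> (\<Sum>n<N. exp (k + real n + 1) * indicator (A n) w)
           + exp (-e * (k + real N)) * exp ((1 + e) * X w)"
    proof (cases "X w > k")
      case False thus ?thesis using S0 E0 by simp
    next
      case True
      show ?thesis
      proof (cases "X w \<ge> k + real N")
        case True
        have "exp (X w) = exp (-e * X w) * exp ((1 + e) * X w)"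
          by (simp add: exp_add[symmetric] algebra_simps)
        also have "\<dots> \<le> exp (-e * (k + real N)) * exp ((1 + e) * X w)"
          using True e by (intro mult_right_mono) auto
        finally show ?thesis using S0 by (smt (verit) exp_gt_zero True)
      next
        case False
        define n where "n = nat (\<lceil>X w - k\<rceil> - 1)"
        have n1: "real n < X w - k" "X w - k \<le> real n + 1" using \<open>X w > k\<close> unfolding n_def
          by linarith+
        have nN: "n < N" using False n1 by linarith
        have "exp (X w) \<le> exp (k + real n + 1) * indicator (A n) w"
          using n1 w \<open>X w > k\<close> unfolding A_def
          by (auto simp: indicator_def)
        also have "\<dots> \<le> (\<Sum>n<N. exp (k + real n + 1) * indicator (A n) w)"
          using nN by (intro member_le_sum) auto
        finally show ?thesis using True E0 by (smt (verit) exp_gt_zero)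
      qed
    qed
  qed
  also have "\<dots> = (\<Sum>n<N. exp (k + real n + 1) * tailX M X (k + real n))
           + exp (-e * (k + real N)) * (\<integral>w. exp ((1 + e) * X w) \<partial>M)"
  proof -
    have IS: "integrable M (\<lambda>w. \<Sum>n<N. exp (k + real n + 1) * indicator (A n) w)"
      using IA by (intro Bochner_Integration.integrable_sum) auto
    have "(\<integral>w. (\<Sum>n<N. exp (k + real n + 1) * indicator (A n) w)
           + exp (-e * (k + real N)) * exp ((1 + e) * X w) \<partial>M)
        = (\<integral>w. (\<Sum>n<N. exp (k + real n + 1) * indicator (A n) w) \<partial>M)
           + (\<integral>w. exp (-e * (k + real N)) * exp ((1 + e) * X w) \<partial>M)"
      using IS int by (intro Bochner_Integration.integral_add) auto
    also have "(\<integral>w. (\<Sum>n<N. exp (k + real n + 1) * indicator (A n) w) \<partial>M)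
       = (\<Sum>n<N. (\<integral>w. exp (k + real n + 1) * indicator (A n) w \<partial>M))"
      using IA by (intro Bochner_Integration.integral_sum) auto
    also have "\<dots> = (\<Sum>n<N. exp (k + real n + 1) * tailX M X (k + real n))"
    proof (rule sum.cong)
      fix n
      have "(\<integral>w. exp (k + real n + 1) * indicator (A n) w \<partial>M)
          = exp (k + real n + 1) * (\<integral>w. indicator (A n) w \<partial>M)"
        by (rule Bochner_Integration.integral_mult_right) (use IA A in \<open>auto simp: emeasure_eq_measure\<close>)
      also have "(\<integral>w. indicator (A n) w \<partial>M) = measure M (A n)"
        using A[of n] sets.sets_into_space[OF A[of n]] by (simp add: Int_absorb2)
      finally show "(\<integral>w. exp (k + real n + 1) * indicator (A n) w \<partial>M)
          = exp (k + real n + 1) * tailX M X (k + real n)"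
        using tail_eq[OF P Xm] unfolding A_def by simp
    qed simp
    also have "(\<integral>w. exp (-e * (k + real N)) * exp ((1 + e) * X w) \<partial>M)
        = exp (-e * (k + real N)) * (\<integral>w. exp ((1 + e) * X w) \<partial>M)"
      by (rule Bochner_Integration.integral_mult_right) (use int in auto)
    finally show ?thesis .
  qed
  finally show ?thesis .
qed



lemma key_step:
  fixes G :: "real \<Rightarrow> real"
  assumes mono: "\<And>x y. x \<le> y \<Longrightarrow> G x \<le> G y"
    and K: "K > 0"
    and ga: "\<And>x. x \<ge> K \<Longrightarrow> G x \<ge> a * x"
    and gl: "\<And>x. x \<ge> K \<Longrightarrow> G (l * x) \<ge> (l - \<eta>) * G x"
    and l: "l > 1" and hs: "(1+e)*(l-1) \<le> \<delta>*(a-1)"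
    and st: "e*(l-1) \<le> (1-\<delta>)*((l-1-\<eta>)*a - (l-1))"
    and d: "0 \<le> \<delta>" "\<delta> \<le> 1" and e: "e \<ge> 0" and le: "l - 1 - \<eta> \<ge> 0" and a: "a \<ge> 1"
  shows "\<forall>k x. K \<le> k \<longrightarrow> k \<le> x \<longrightarrow> x \<le> l^n * k \<longrightarrow> G x - x \<ge> (1-\<delta>)*(G k - k) + e*(x-k)"
proof (induction n)
  case 0
  show ?case
  proof (intro allI impI)
    fix k x :: real assume "K \<le> k" "k \<le> x" "x \<le> l^0 * k"
    hence "x = k" by simp
    have "G k - k \<ge> (a-1)*k" using ga[OF \<open>K \<le> k\<close>] by (simp add: algebra_simps)
    moreover have "(a-1)*k \<ge> 0" using a K \<open>K \<le> k\<close> by simp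
    ultimately have "G k - k \<ge> 0" by linarith
    hence "(1-\<delta>)*(G k - k) \<le> G k - k" using d by (simp add: mult_left_le_one_le)
    thus "G x - x \<ge> (1-\<delta>)*(G k - k) + e*(x-k)" using \<open>x = k\<close> by simp
  qed
next
  case (Suc n)
  have single: "G x - x \<ge> (1-\<delta>)*(G k - k) + e*(x-k)" if "K \<le> k" "k \<le> x" "x \<le> l * k" for k x
  proof -
    have k0: "k > 0" using K that by simp
    have "G x \<ge> G k" using mono that by simp
    have "x - k \<le> (l-1)*k" using that by (simp add: algebra_simps)
    hence "(1+e)*(x-k) \<le> (1+e)*((l-1)*k)" using e by (intro mult_left_mono) auto
    also have "\<dots> = ((1+e)*(l-1))*k" by simp
    also have "\<dots> \<le> (\<delta>*(a-1))*k" using hs k0 by (intro mult_right_mono) auto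
    also have "\<dots> = \<delta>*((a-1)*k)" by simp
    also have "\<dots> \<le> \<delta>*(G k - k)"
      using ga[OF \<open>K \<le> k\<close>] d by (intro mult_left_mono) (auto simp: algebra_simps)
    finally have "\<delta>*(G k - k) \<ge> (1+e)*(x-k)" .
    thus ?thesis using \<open>G x \<ge> G k\<close> by (simp add: algebra_simps)
  qed
  show ?case
  proof (intro allI impI)
    fix k x :: real assume kx: "K \<le> k" "k \<le> x" "x \<le> l^Suc n * k"
    have k0: "k > 0" using K kx by simp
    show "G x - x \<ge> (1-\<delta>)*(G k - k) + e*(x-k)"
    proof (cases "x \<le> l * k")
      case True thus ?thesis using single kx by blast
    next
      case False
      have lk: "K \<le> l * k" using kx l k0
        by (smt (verit) mult_le_cancel_right1)
      have "x \<le> l^n * (l * k)" using kx by (simp add: algebra_simps)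
      hence IH: "G x - x \<ge> (1-\<delta>)*(G (l*k) - l*k) + e*(x-l*k)"
        using Suc.IH lk False by auto
      have "G (l*k) - G k \<ge> (l-1-\<eta>) * G k" using gl[OF kx(1)] by (simp add: algebra_simps)
      moreover have "(l-1-\<eta>) * G k \<ge> (l-1-\<eta>) * (a*k)" using ga[OF kx(1)] le by (intro mult_left_mono)
      ultimately have "G (l*k) - l*k - (G k - k) \<ge> ((l-1-\<eta>)*a - (l-1)) * k"
        by (simp add: algebra_simps)
      hence "(1-\<delta>)*(G (l*k) - l*k - (G k - k)) \<ge> (1-\<delta>)*(((l-1-\<eta>)*a - (l-1)) * k)"
        using d by (intro mult_left_mono) auto
      moreover have "(1-\<delta>)*(((l-1-\<eta>)*a - (l-1)) * k) \<ge> e*(l-1)*k"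
        using st k0 by (metis mult.assoc mult_right_mono less_imp_le)
      ultimately have "(1-\<delta>)*(G (l*k) - l*k) \<ge> (1-\<delta>)*(G k - k) + e*(l-1)*k"
        by (simp add: algebra_simps)
      thus ?thesis using IH by (simp add: algebra_simps)
    qed
  qed
qed

lemma key:
  fixes G :: "real \<Rightarrow> real"
  assumes mono: "\<And>x y. x \<le> y \<Longrightarrow> G x \<le> G y"
    and K: "K > 0"
    and ga: "\<And>x. x \<ge> K \<Longrightarrow> G x \<ge> a * x"
    and gl: "\<And>x. x \<ge> K \<Longrightarrow> G (l * x) \<ge> (l - \<eta>) * G x"
    and l: "l > 1" and hs: "(1+e)*(l-1) \<le> \<delta>*(a-1)"
    and st: "e*(l-1) \<le> (1-\<delta>)*((l-1-\<eta>)*a - (l-1))"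
    and d: "0 \<le> \<delta>" "\<delta> \<le> 1" and e: "e \<ge> 0" and le: "l - 1 - \<eta> \<ge> 0" and a: "a \<ge> 1"
    and kx: "K \<le> k" "k \<le> x"
  shows "G x - x \<ge> (1-\<delta>)*(G k - k) + e*(x-k)"
proof -
  have k0: "k > 0" using K kx by simp
  obtain n where "x / k < l^n" using real_arch_pow[OF l] by blast
  hence "x \<le> l^n * k" using k0 by (simp add: field_simps)
  thus ?thesis using key_step[OF assms(1-12)] kx by blast
qed



lemma div_aux: "(B::real) \<noteq> 0 \<Longrightarrow> C \<noteq> 0 \<Longrightarrow> D \<noteq> 0 \<Longrightarrow> A / B * (B / C) / (D / C) = A / D"
  by (simp add: field_simps)

lemma abs_main:
  fixes T c :: "real \<Rightarrow> real"
  assumes Tnn: "\<And>x. T x \<ge> 0"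
  and Tanti: "\<And>x y. x \<le> y \<Longrightarrow> T y \<le> T x"
  and EE: "EE > 0" and e: "\<epsilon> > 0"
  and Tmk: "\<And>x. T x \<le> EE * exp (-(1+\<epsilon>)*x)"
  and clow: "\<And>k y. k \<le> y \<Longrightarrow> (exp y - exp k) * T y \<le> c k"
  and cup: "\<And>k N. c k \<le> (\<Sum>n<N. exp (k + real n + 1) * T (k + real n)) + exp (-\<epsilon>*(k + real N)) * EE"
  and canti: "\<And>k y. k \<le> y \<Longrightarrow> c y \<le> c k"
  and rv: "regvar (\<lambda>x. - ln (T x)) \<alpha>" and \<alpha>: "\<alpha> \<ge> 1"
  shows "regvar (\<lambda>k. - ln (c k)) \<alpha> \<and> asym_eq (\<lambda>k. - ln (c k)) (\<lambda>k. - k - ln (T k))"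
proof -
  define G where "G x = - ln (T x)" for x
  define H where "H x = G x - x" for x
  define L where "L k = - ln (c k)" for k
  from rv have Gpos_ev: "\<forall>\<^sub>F x in at_top. G x > 0"
    and Grat: "\<And>l. l > 0 \<Longrightarrow> ((\<lambda>x. G (l*x) / G x) \<longlongrightarrow> l powr \<alpha>) at_top"
    unfolding regvar_def G_def by auto
  have Tpos: "T x > 0" for x
  proof -
    obtain x0 where x0: "\<And>y. y \<ge> x0 \<Longrightarrow> G y > 0" using Gpos_ev by (auto simp: eventually_at_top_linorder)
    have "G (max x x0) > 0" using x0 by simp
    hence "T (max x x0) \<noteq> 0" unfolding G_def by auto
    hence "T (max x x0) > 0" using Tnn[of "max x x0"] by linarith
    moreover have "T (max x x0) \<le> T x" using Tanti by simp
    ultimately show ?thesis by linarith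
  qed
  have Texp: "T x = exp (- G x)" for x using Tpos[of x] by (simp add: G_def)
  have Gmono: "G x \<le> G y" if "x \<le> y" for x y
    using Tanti[OF that] Tpos[of x] Tpos[of y] unfolding G_def by simp
  have Glow: "G x \<ge> (1+\<epsilon>)*x - ln EE" for x
  proof -
    have "ln (T x) \<le> ln (EE * exp (-(1+\<epsilon>)*x))" using Tmk[of x] Tpos[of x] EE by simp
    also have "\<dots> = ln EE - (1+\<epsilon>)*x" using EE by (simp add: ln_mult algebra_simps)
    finally show ?thesis unfolding G_def by simp
  qed
  define a where "a = 1 + \<epsilon>/2"
  define K0 where "K0 = max 1 (2 * \<bar>ln EE\<bar> / \<epsilon>)"
  have K0: "K0 \<ge> 1" unfolding K0_def by simp
  have a1: "a > 1" using e unfolding a_def by simp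
  have Ga: "G x \<ge> a * x" if "x \<ge> K0" for x
  proof -
    have "x \<ge> 2 * \<bar>ln EE\<bar> / \<epsilon>" using that unfolding K0_def by simp
    hence "\<epsilon> * x \<ge> 2 * \<bar>ln EE\<bar>" using e by (simp add: field_simps)
    thus ?thesis using Glow[of x] unfolding a_def by (simp add: algebra_simps)
  qed
  have Ha: "H x \<ge> (a-1)*x" if "x \<ge> K0" for x
    using Ga[OF that] unfolding H_def by (simp add: algebra_simps)
  have Hpos: "H x > 0" if "x \<ge> K0" for x
  proof -
    have "(a-1)*x > 0" using a1 K0 that by simp
    thus ?thesis using Ha[OF that] by linarith
  qed
  have GH: "G x \<le> (a/(a-1)) * H x" if "x \<ge> K0" for x
  proof -
    have "a * H x - (a-1) * G x = G x - a * x" unfolding H_def by (simp add: algebra_simps)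
    hence "(a-1) * G x \<le> a * H x" using Ga[OF that] by simp
    thus ?thesis using a1 by (simp add: field_simps)
  qed
  have cpos: "c k > 0" for k
  proof -
    have "(exp (k+1) - exp k) * T (k+1) > 0" using Tpos by simp
    thus ?thesis using clow[of k "k+1"] by simp
  qed
  have Lmono: "L x \<le> L y" if "x \<le> y" for x y
    using canti[OF that] cpos[of x] cpos[of y] unfolding L_def by simp
  have ratio_low: "\<exists>K. \<forall>x\<ge>K. G (l*x) \<ge> b * G x" if "l > 0" "b < l powr \<alpha>" for l b
  proof -
    have "\<forall>\<^sub>F x in at_top. G (l*x)/G x > b" using Grat[OF that(1)] that(2) by (simp add: order_tendsto_iff)
    with Gpos_ev have "\<forall>\<^sub>F x in at_top. G (l*x) \<ge> b * G x"
      by eventually_elim (simp add: pos_less_divide_eq)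
    thus ?thesis by (auto simp: eventually_at_top_linorder)
  qed
  have ratio_up: "\<exists>K. \<forall>x\<ge>K. G (l*x) \<le> b * G x" if "l > 0" "b > l powr \<alpha>" for l b
  proof -
    have "\<forall>\<^sub>F x in at_top. G (l*x)/G x < b" using Grat[OF that(1)] that(2) by (simp add: order_tendsto_iff)
    with Gpos_ev have "\<forall>\<^sub>F x in at_top. G (l*x) \<le> b * G x"
      by eventually_elim (simp add: pos_divide_less_eq)
    thus ?thesis by (auto simp: eventually_at_top_linorder)
  qed
  have Llow: "\<exists>B>0. \<exists>K. \<forall>k\<ge>K. L k \<ge> (1-\<delta>)*H k - ln B" if d: "0 < \<delta>" "\<delta> \<le> 1/2" for \<delta>
  proof -
    define l where "l = 1 + \<delta>*(a-1)/2"
    define \<eta> where "\<eta> = (l-1)*(a-1)/(2*a)"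
    define e' where "e' = min 1 ((a-1)/4)"
    have l1: "l > 1" using d a1 unfolding l_def by simp
    have e'0: "e' > 0" using a1 unfolding e'_def by simp
    have \<eta>0: "\<eta> > 0" using l1 a1 unfolding \<eta>_def by simp
    have "l powr \<alpha> \<ge> l powr 1" using \<alpha> l1 by (intro powr_mono) auto
    hence "l - \<eta> < l powr \<alpha>" using \<eta>0 l1 by simp
    then obtain K1 where K1: "\<And>x. x \<ge> K1 \<Longrightarrow> G (l*x) \<ge> (l-\<eta>) * G x"
      using ratio_low[of l "l - \<eta>"] l1 by auto
    define K where "K = max K0 K1"
    have KK0: "K \<ge> K0" unfolding K_def by simp
    have hs: "(1+e')*(l-1) \<le> \<delta>*(a-1)"
    proof -
      have "(1+e')*(l-1) \<le> 2*(l-1)" using l1 unfolding e'_def by (intro mult_right_mono) auto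
      thus ?thesis unfolding l_def by simp
    qed
    have le: "l - 1 - \<eta> \<ge> 0"
    proof -
      have "(a-1)/(2*a) \<le> 1" using a1 by (simp add: field_simps)
      hence "\<eta> \<le> (l-1)*1" unfolding \<eta>_def using l1
        by (metis mult_left_mono less_imp_le diff_gt_0_iff_gt times_divide_eq_right)
      thus ?thesis by simp
    qed
    have st: "e'*(l-1) \<le> (1-\<delta>)*((l-1-\<eta>)*a - (l-1))"
    proof -
      have eq: "(l-1-\<eta>)*a - (l-1) = (l-1)*(a-1)/2" unfolding \<eta>_def using a1 by (simp add: field_simps)
      have "e' \<le> (a-1)/4" unfolding e'_def by (rule min.cobounded2)
      hence "e'*(l-1) \<le> ((a-1)/4)*(l-1)" using l1 by (intro mult_right_mono) auto
      also have "\<dots> = (1/2) * ((l-1)*(a-1)/2)" by simp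
      also have "\<dots> \<le> (1-\<delta>) * ((l-1)*(a-1)/2)" using d l1 a1 by (intro mult_right_mono) auto
      finally show ?thesis unfolding eq .
    qed
    have keyi: "G x - x \<ge> (1-\<delta>)*(G k - k) + e'*(x-k)" if "K \<le> k" "k \<le> x" for k x
    proof (rule key[where K=K and G=G and a=a and l=l and \<eta>=\<eta> and e=e' and \<delta>=\<delta>])
      show "K > 0" using KK0 K0 by simp
      show "\<And>x. K \<le> x \<Longrightarrow> a * x \<le> G x" using Ga KK0 by simp
      show "\<And>x. K \<le> x \<Longrightarrow> (l - \<eta>) * G x \<le> G (l * x)" using K1 unfolding K_def by simp
    qed (use Gmono l1 hs st d e'0 le a1 that in auto)
    define q where "q = exp (-e')"
    have q: "0 < q" "q < 1" using e'0 unfolding q_def by auto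
    define B where "B = exp 1 / (1 - q) + EE"
    have B0: "B > 0" using q EE unfolding B_def by (intro add_pos_pos divide_pos_pos) auto
    have cb: "c k \<le> B * exp (-((1-\<delta>)*H k))" if k: "k \<ge> K" for k
    proof -
      define N where "N = nat \<lceil>H k / \<epsilon>\<rceil>"
      have Hk0: "H k > 0" using Hpos KK0 k by simp
      have k0: "k \<ge> 0" using K0 KK0 k by simp
      have tm: "exp (k + real n + 1) * T (k + real n) \<le> exp 1 * exp (-((1-\<delta>)*H k)) * q^n" for n
      proof -
        have "exp (k + real n + 1) * T (k + real n) = exp (1 - H (k + real n))"
          unfolding Texp H_def by (simp add: exp_add[symmetric] algebra_simps)
        also have "\<dots> \<le> exp (1 - ((1-\<delta>)*H k + e'*real n))"
          using keyi[of k "k + real n"] k unfolding H_def by simp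
        also have "\<dots> = exp 1 * exp (-((1-\<delta>)*H k)) * exp (real n * (-e'))"
          by (simp add: exp_add[symmetric] exp_diff algebra_simps)
        also have "\<dots> = exp 1 * exp (-((1-\<delta>)*H k)) * q^n" unfolding q_def by (simp only: exp_of_nat_mult)
        finally show ?thesis .
      qed
      have "(\<Sum>n<N. exp (k + real n + 1) * T (k + real n)) \<le> (\<Sum>n<N. exp 1 * exp (-((1-\<delta>)*H k)) * q^n)"
        by (intro sum_mono tm)
      also have "\<dots> = exp 1 * exp (-((1-\<delta>)*H k)) * (\<Sum>n<N. q^n)" by (simp add: sum_distrib_left)
      also have "(\<Sum>n<N. q^n) \<le> 1 / (1 - q)"
        using q by (simp add: sum_gp_strict field_simps)
      hence "exp 1 * exp (-((1-\<delta>)*H k)) * (\<Sum>n<N. q^n) \<le> exp 1 * exp (-((1-\<delta>)*H k)) * (1 / (1 - q))"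
        by (intro mult_left_mono) auto
      finally have S: "(\<Sum>n<N. exp (k + real n + 1) * T (k + real n)) \<le> exp 1 / (1 - q) * exp (-((1-\<delta>)*H k))"
        by simp
      have "real N \<ge> H k / \<epsilon>" unfolding N_def by linarith
      hence "\<epsilon> * real N \<ge> H k" using e by (simp add: field_simps)
      moreover have "(1-\<delta>)*H k \<le> H k" using d Hk0 by (simp add: mult_left_le_one_le)
      moreover have "\<epsilon>*k \<ge> 0" using e k0 by simp
      ultimately have "\<epsilon>*(k + real N) \<ge> (1-\<delta>)*H k" by (simp add: distrib_left)
      hence "exp (-\<epsilon>*(k + real N)) * EE \<le> exp (-((1-\<delta>)*H k)) * EE" using EE by (intro mult_right_mono) auto
      with S cup[of k N] show ?thesis unfolding B_def by (simp add: algebra_simps)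
    qed
    have "\<forall>k\<ge>K. L k \<ge> (1-\<delta>)*H k - ln B"
    proof (intro allI impI)
      fix k assume "K \<le> k"
      have "ln (c k) \<le> ln (B * exp (-((1-\<delta>)*H k)))" using cb[OF \<open>K \<le> k\<close>] cpos[of k] B0 by simp
      also have "\<dots> = ln B - (1-\<delta>)*H k" using B0 by (simp add: ln_mult)
      finally show "L k \<ge> (1-\<delta>)*H k - ln B" unfolding L_def by simp
    qed
    thus ?thesis using B0 by blast
  qed
  have Lup: "\<exists>K. \<forall>k\<ge>K. L k \<le> G (l*k) - k" if l: "l > 1" for l
  proof -
    define K where "K = max 1 (ln 2/(l-1))"
    have "\<forall>k\<ge>K. L k \<le> G (l*k) - k"
    proof (intro allI impI)
      fix k assume k: "K \<le> k"
      have k0: "k > 0" using k unfolding K_def by simp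
      have "ln 2 / (l-1) \<le> k" using k unfolding K_def by simp
      hence "ln 2 \<le> (l-1)*k" using l by (simp add: field_simps)
      hence "exp (ln 2) \<le> exp ((l-1)*k)" by (simp only: exp_le_cancel_iff)
      hence "2 \<le> exp ((l-1)*k)" by simp
      moreover have "exp (l*k) = exp ((l-1)*k) * exp k" by (simp add: exp_add[symmetric] algebra_simps)
      moreover have "exp ((l-1)*k) * exp k \<ge> 2 * exp k" using \<open>2 \<le> exp ((l-1)*k)\<close> by (rule mult_right_mono) simp
      ultimately have "exp (l*k) - exp k \<ge> exp k" by linarith
      hence "exp k * T (l*k) \<le> (exp (l*k) - exp k) * T (l*k)" using Tpos[of "l*k"] by (intro mult_right_mono) auto
      also have "\<dots> \<le> c k" using clow[of k "l*k"] l k0 by (simp add: mult_le_cancel_right1 less_imp_le)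
      finally have "exp (k - G (l*k)) \<le> c k" unfolding Texp by (simp add: exp_diff exp_minus field_simps)
      hence "ln (exp (k - G (l*k))) \<le> ln (c k)" using cpos[of k] by (subst ln_le_cancel_iff) auto
      thus "L k \<le> G (l*k) - k" unfolding L_def by simp
    qed
    thus ?thesis by blast
  qed
  have asym: "((\<lambda>k. L k / H k) \<longlongrightarrow> 1) at_top"
  proof (unfold order_tendsto_iff, intro conjI allI impI)
    fix b :: real assume b: "b < 1"
    define \<delta> where "\<delta> = min (1/2) ((1-b)/2)"
    have d3: "\<delta> \<le> (1-b)/2" unfolding \<delta>_def by (rule min.cobounded2)
    have d2: "\<delta> \<le> 1/2" unfolding \<delta>_def by (rule min.cobounded1)
    have d1: "0 < \<delta>" using b unfolding \<delta>_def by simp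
    note d = d1 d2 d3
    obtain B K where B: "B > 0" and K: "\<And>k. k \<ge> K \<Longrightarrow> L k \<ge> (1-\<delta>)*H k - ln B"
      using Llow[OF d(1,2)] by blast
    define K2 where "K2 = max (max K K0) (2*(\<bar>ln B\<bar>+1)/((1-b)*(a-1)))"
    have "L k / H k > b" if k: "k \<ge> K2" for k
    proof -
      have kK0: "k \<ge> K0" using k unfolding K2_def by simp
      have Hk: "H k > 0" using Hpos[OF kK0] .
      have "k \<ge> 2*(\<bar>ln B\<bar>+1)/((1-b)*(a-1))" using k unfolding K2_def by simp
      moreover have pd: "(1-b)*(a-1) > 0" using b a1 by simp
      ultimately have "k * ((1-b)*(a-1)) \<ge> 2*(\<bar>ln B\<bar>+1)" by (simp only: pos_divide_le_eq)
      moreover have "(1-b) * H k \<ge> (1-b) * ((a-1)*k)" using Ha[OF kK0] b by (intro mult_left_mono) auto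
      ultimately have h1: "(1-b) * H k \<ge> 2*(\<bar>ln B\<bar>+1)" by (simp add: algebra_simps)
      have "L k \<ge> (1-\<delta>)*H k - ln B" using K k unfolding K2_def by simp
      moreover have "(1-\<delta>)*H k \<ge> (1 - (1-b)/2) * H k" using d Hk by (intro mult_right_mono) auto
      moreover have "(1 - (1-b)/2) * H k = b * H k + ((1-b) * H k)/2" by (simp add: algebra_simps)
      moreover have "ln B \<le> \<bar>ln B\<bar>" by simp
      ultimately have "L k > b * H k" using h1 by argo
      thus ?thesis using Hk by (simp add: pos_less_divide_eq)
    qed
    thus "\<forall>\<^sub>F k in at_top. L k / H k > b" by (auto simp: eventually_at_top_linorder)
  next
    fix b :: real assume b: "b > 1"
    define sv where "sv = (b-1)*(a-1)/a"
    have s0: "sv > 0" using b a1 unfolding sv_def by simp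
    define l where "l = (1 + sv/2) powr (1/\<alpha>)"
    have l1: "l > 1" unfolding l_def using s0 \<alpha> by simp
    have la: "l powr \<alpha> = 1 + sv/2" unfolding l_def using \<alpha> s0 by (simp add: powr_powr)
    obtain K1 where K1: "\<And>x. x \<ge> K1 \<Longrightarrow> G (l*x) \<le> (l powr \<alpha> + sv/4) * G x"
      using ratio_up[of l "l powr \<alpha> + sv/4"] l1 s0 by auto
    obtain K2 where K2: "\<And>k. k \<ge> K2 \<Longrightarrow> L k \<le> G (l*k) - k" using Lup[OF l1] by blast
    have "L k / H k < b" if k: "k \<ge> max K0 (max K1 K2)" for k
    proof -
      have kK0: "k \<ge> K0" using k by simp
      have Hk: "H k > 0" using Hpos[OF kK0] .
      have Gk: "G k > 0" using Hk kK0 K0 unfolding H_def by simp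
      have "L k \<le> G (l*k) - k" using K2 k by simp
      also have "\<dots> \<le> (1 + 3* sv/4) * G k - k" using K1[of k] k la by (simp add: add.commute)
      also have "\<dots> = H k + (3* sv/4) * G k" unfolding H_def by (simp add: algebra_simps)
      also have "(3* sv/4) * G k \<le> (3* sv/4) * ((a/(a-1)) * H k)" using GH[OF kK0] s0 by (intro mult_left_mono) auto
      also have "(3* sv/4) * ((a/(a-1)) * H k) = (3*(b-1)/4) * H k" unfolding sv_def using a1 by (simp add: field_simps)
      finally have "L k \<le> (1 + 3*(b-1)/4) * H k" by (simp add: algebra_simps)
      also have "\<dots> < b * H k" using Hk b by (intro mult_strict_right_mono) (auto simp: field_simps)
      finally show ?thesis using Hk by (simp add: pos_divide_less_eq)
    qed
    thus "\<forall>\<^sub>F k in at_top. L k / H k < b" unfolding eventually_at_top_linorder by blast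
  qed
  have Hev: "\<forall>\<^sub>F k in at_top. H k > 0" using Hpos by (auto simp: eventually_at_top_linorder)
  have Lpos: "\<forall>\<^sub>F k in at_top. L k > 0"
  proof -
    have "\<forall>l<1. \<forall>\<^sub>F x in at_top. l < L x / H x" using asym unfolding order_tendsto_iff by blast
    hence "\<forall>\<^sub>F k in at_top. L k / H k > 1/2" by (erule_tac allE[where x="1/2"]) (erule impE, simp, assumption)
    with Hev show ?thesis
    proof eventually_elim
      case (elim k)
      hence "L k / H k > 0" by linarith
      thus ?case using elim(1) by (simp add: zero_less_divide_iff)
    qed
  qed
  have kH0: "((\<lambda>k. k / H k) \<longlongrightarrow> 0) at_top" if \<alpha>1: "\<alpha> > 1"
  proof -
    define \<rho> where "\<rho> = (2 powr \<alpha> + 2)/2"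
    have "2 powr \<alpha> > 2 powr 1" using \<alpha>1 by (intro powr_less_mono) auto
    hence \<rho>: "\<rho> > 2" "\<rho> < 2 powr \<alpha>" unfolding \<rho>_def by auto
    obtain K1 where K1: "\<And>x. x \<ge> K1 \<Longrightarrow> G (2*x) \<ge> \<rho> * G x" using ratio_low[of 2 \<rho>] \<rho> by auto
    define K2 where "K2 = max K0 K1"
    have K2: "K2 \<ge> 1" using K0 unfolding K2_def by simp
    have G0: "G x \<ge> 0" if "x \<ge> K2" for x
    proof -
      have "a * x \<ge> 0" using a1 K2 that by simp
      thus ?thesis using Ga[of x] that unfolding K2_def by simp
    qed
    have iter: "\<forall>y\<ge>K2. G (2^n * y) \<ge> \<rho>^n * G y" for n
    proof (induction n)
      case 0 show ?case by simp
    next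
      case (Suc n)
      show ?case
      proof (intro allI impI)
        fix y assume y: "y \<ge> K2"
        have y2: "2*y \<ge> K2" using y K2 by simp
        have "G (2^Suc n * y) = G (2^n * (2*y))" by (simp add: algebra_simps)
        also have "\<dots> \<ge> \<rho>^n * G (2*y)" using Suc.IH y2 by blast
        also have "\<rho>^n * G (2*y) \<ge> \<rho>^n * (\<rho> * G y)"
          using K1[of y] y \<rho> unfolding K2_def by (intro mult_left_mono) auto
        finally show "G (2^Suc n * y) \<ge> \<rho>^Suc n * G y" by (simp add: algebra_simps)
      qed
    qed
    have big: "\<exists>K. \<forall>x\<ge>K. G x \<ge> M * x" for M
    proof -
      obtain n where n: "M/a < (\<rho>/2)^n" using real_arch_pow[of "\<rho>/2" "M/a"] \<rho> by auto
      have "\<forall>x\<ge>2^n*K2. G x \<ge> M * x"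
      proof (intro allI impI)
        fix x assume x: "x \<ge> 2^n*K2"
        define y where "y = x / 2^n"
        have y: "y \<ge> K2" using x unfolding y_def by (simp add: field_simps)
        have xy: "x = 2^n * y" unfolding y_def by simp
        have "2^n*K2 > 0" using K2 by simp
        hence x0: "x > 0" using x by linarith
        have "G x \<ge> \<rho>^n * G y" using iter[of n] y xy by simp
        moreover have "\<rho>^n * G y \<ge> \<rho>^n * (a * y)" using Ga[of y] y \<rho> unfolding K2_def by (intro mult_left_mono) auto
        moreover have "\<rho>^n * (a * y) = a * (\<rho>/2)^n * x" unfolding xy by (simp add: power_divide field_simps)
        moreover have "M * x \<le> a * (\<rho>/2)^n * x" using n a1 x0 by (intro mult_right_mono) (auto simp: field_simps)
        ultimately show "G x \<ge> M * x" by linarith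
      qed
      thus ?thesis by blast
    qed
    show ?thesis unfolding tendsto_iff
    proof (intro allI impI)
      fix r :: real assume r: "r > 0"
      obtain K where K: "\<And>x. x \<ge> K \<Longrightarrow> G x \<ge> (2 + 1/r) * x" using big[of "2 + 1/r"] by blast
      have "dist (k / H k) 0 < r" if k: "k \<ge> max K K0" for k
      proof -
        have k0: "k > 0" using k K0 by simp
        have "H k \<ge> (1 + 1/r) * k" using K[of k] k unfolding H_def by (simp add: algebra_simps)
        hence "H k > k / r" using k0 r by (simp add: algebra_simps)
        moreover have "k / r > 0" using k0 r by simp
        ultimately have Hk0: "H k > 0" by linarith
        have "k < H k * r" using \<open>H k > k / r\<close> r by (simp add: field_simps)
        hence "k / H k < r" using Hk0 by (simp add: divide_less_eq mult.commute)
        moreover have "k / H k > 0" using k0 Hk0 by simp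
        ultimately show ?thesis by simp
      qed
      thus "\<forall>\<^sub>F k in at_top. dist (k / H k) 0 < r" unfolding eventually_at_top_linorder by blast
    qed
  qed
  have Hrat: "((\<lambda>k. H (l*k) / H k) \<longlongrightarrow> l powr \<alpha>) at_top" if l: "l > 0" for l
  proof -
    define r where "r k = G (l*k) / G k" for k
    define la where "la = l powr \<alpha>"
    have eq: "\<forall>\<^sub>F k in at_top. la + (r k - la) * (G k / H k) + (la - l) * (k / H k) = H (l*k) / H k"
    proof -
      have "la + (r k - la) * (G k / H k) + (la - l) * (k / H k) = H (l*k) / H k" if k: "k \<ge> K0" for k
      proof -
        have Hk: "H k > 0" using Hpos[OF k] .
        have "a * k > 0" using a1 k K0 by simp
        hence Gk: "G k > 0" using Ga[OF k] by linarith
        have "(la + (r k - la) * (G k / H k) + (la - l) * (k / H k)) * H k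
            = la * H k + (r k - la) * G k + (la - l) * k" using Hk by (simp add: field_simps)
        also have "\<dots> = H (l*k)" unfolding r_def H_def using Gk by (simp add: field_simps)
        finally show ?thesis using Hk by (simp add: field_simps)
      qed
      thus ?thesis unfolding eventually_at_top_linorder by blast
    qed
    have t1: "((\<lambda>k. (r k - la) * (G k / H k)) \<longlongrightarrow> 0) at_top"
    proof (rule Lim_null_comparison)
      have bnd: "\<bar>G k / H k\<bar> \<le> a/(a-1)" if k: "k \<ge> K0" for k
      proof -
        have Hk: "H k > 0" using Hpos[OF k] .
        have "a * k > 0" using a1 k K0 by simp
        hence Gk: "G k > 0" using Ga[OF k] by linarith
        show ?thesis using GH[OF k] Hk Gk by (simp add: field_simps)
      qed
      have "\<forall>k\<ge>K0. norm ((r k - la) * (G k / H k)) \<le> \<bar>r k - la\<bar> * (a/(a-1))"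
      proof (intro allI impI)
        fix k assume k: "k \<ge> K0"
        have "\<bar>r k - la\<bar> * \<bar>G k / H k\<bar> \<le> \<bar>r k - la\<bar> * (a/(a-1))"
          by (rule mult_left_mono[OF bnd[OF k]]) simp
        thus "norm ((r k - la) * (G k / H k)) \<le> \<bar>r k - la\<bar> * (a/(a-1))"
          by (simp only: real_norm_def abs_mult)
      qed
      thus "\<forall>\<^sub>F k in at_top. norm ((r k - la) * (G k / H k)) \<le> \<bar>r k - la\<bar> * (a/(a-1))"
        unfolding eventually_at_top_linorder by blast
      have "((\<lambda>k. r k - la) \<longlongrightarrow> 0) at_top" using LIM_zero[OF Grat[OF l]] unfolding r_def la_def .
      thus "((\<lambda>k. \<bar>r k - la\<bar> * (a/(a-1))) \<longlongrightarrow> 0) at_top"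
        by (intro tendsto_mult_left_zero tendsto_rabs_zero)
    qed
    have t2: "((\<lambda>k. (la - l) * (k / H k)) \<longlongrightarrow> 0) at_top"
    proof (cases "\<alpha> = 1")
      case True
      hence "la - l = 0" unfolding la_def using l by simp
      thus ?thesis by simp
    next
      case False
      hence "\<alpha> > 1" using \<alpha> by simp
      thus ?thesis by (intro tendsto_mult_right_zero kH0)
    qed
    have "((\<lambda>k. la + (r k - la) * (G k / H k) + (la - l) * (k / H k)) \<longlongrightarrow> la + 0 + 0) at_top"
      by (intro tendsto_add tendsto_const t1 t2)
    hence "((\<lambda>k. la + (r k - la) * (G k / H k) + (la - l) * (k / H k)) \<longlongrightarrow> la) at_top" by simp
    thus ?thesis using tendsto_cong[OF eq] unfolding la_def by simp
  qed
  have Lrat: "((\<lambda>k. L (l*k) / L k) \<longlongrightarrow> l powr \<alpha>) at_top" if l: "l > 0" for l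
  proof -
    have fl: "filterlim (\<lambda>k. l*k) at_top at_top"
      by (rule filterlim_tendsto_pos_mult_at_top[OF tendsto_const l filterlim_ident])
    have f1: "((\<lambda>k. L (l*k) / H (l*k)) \<longlongrightarrow> 1) at_top"
      using filterlim_compose[OF asym fl] .
    have "((\<lambda>k. (L (l*k) / H (l*k)) * (H (l*k) / H k) / (L k / H k)) \<longlongrightarrow> 1 * l powr \<alpha> / 1) at_top"
      by (intro tendsto_divide tendsto_mult f1 Hrat l asym) auto
    hence lim: "((\<lambda>k. (L (l*k) / H (l*k)) * (H (l*k) / H k) / (L k / H k)) \<longlongrightarrow> l powr \<alpha>) at_top" by simp
    have "\<forall>\<^sub>F k in at_top. H (l*k) > 0" using filterlim_iff[THEN iffD1, OF fl, rule_format, OF Hev] by simp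
    then have ev2: "\<forall>\<^sub>F k in at_top. (L (l*k) / H (l*k)) * (H (l*k) / H k) / (L k / H k) = L (l*k) / L k"
      using Hev Lpos
    proof eventually_elim
      case (elim k)
      show ?case using div_aux[of "H (l*k)" "H k" "L k" "L (l*k)"] elim by simp
    qed
    show ?thesis using tendsto_cong[OF ev2, THEN iffD1, OF lim] .
  qed
  have "L \<in> borel_measurable borel" by (rule borel_measurable_mono) (auto simp: mono_def Lmono)
  moreover have "(\<lambda>k. - k - ln (T k)) = H" by (auto simp: H_def G_def)
  ultimately show ?thesis using asym Lrat Lpos unfolding regvar_def asym_eq_def L_def[abs_def] by auto
qed


theorem lemma2:
  fixes M :: "'a measure" and X :: "'a \<Rightarrow> real" and \<alpha> :: real
  assumes "prob_space M"
    and "X \<in> borel_measurable M"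
    and "\<exists>\<epsilon>>0. integrable M (\<lambda>w. exp ((1 + \<epsilon>) * X w))"
    and "regvar (\<lambda>x. - ln (tailX M X x)) \<alpha>"
    and "\<alpha> \<ge> 1"
  shows "regvar (\<lambda>k. - ln (callX M X k)) \<alpha> \<and>
         asym_eq (\<lambda>k. - ln (callX M X k)) (\<lambda>k. - k - ln (tailX M X k))"
proof -
  note P = assms(1) and Xm = assms(2)
  obtain \<epsilon> where e: "\<epsilon> > 0" and int: "integrable M (\<lambda>w. exp ((1 + \<epsilon>) * X w))"
    using assms(3) by blast
  define E1 where "E1 = max 1 (\<integral>w. exp ((1 + \<epsilon>) * X w) \<partial>M)"
  have E1: "E1 > 0" unfolding E1_def by simp
  show ?thesis
  proof (rule abs_main[where T="tailX M X" and c="callX M X" and EE=E1 and \<epsilon>=\<epsilon>])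
    show "\<And>x. tailX M X x \<ge> 0" using tail_eq[OF P Xm] by simp
    show "\<And>x y. x \<le> y \<Longrightarrow> tailX M X y \<le> tailX M X x" using tail_anti[OF P Xm] by blast
    show "E1 > 0" by (rule E1)
    show "\<epsilon> > 0" by (rule e)
    show "\<And>x. tailX M X x \<le> E1 * exp (-(1+\<epsilon>)*x)"
    proof -
      fix x
      have "tailX M X x \<le> (\<integral>w. exp ((1 + \<epsilon>) * X w) \<partial>M) * exp (-(1+\<epsilon>)*x)"
        by (rule tail_markov[OF P Xm e int])
      also have "\<dots> \<le> E1 * exp (-(1+\<epsilon>)*x)" unfolding E1_def by (intro mult_right_mono) auto
      finally show "tailX M X x \<le> E1 * exp (-(1+\<epsilon>)*x)" .
    qed
    show "\<And>k y. k \<le> y \<Longrightarrow> (exp y - exp k) * tailX M X y \<le> callX M X k"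
      using call_lower[OF P Xm e int] by blast
    show "\<And>k N. callX M X k \<le> (\<Sum>n<N. exp (k + real n + 1) * tailX M X (k + real n))
           + exp (-\<epsilon>*(k + real N)) * E1"
    proof -
      fix k N
      have "exp (-\<epsilon>*(k + real N)) * (\<integral>w. exp ((1 + \<epsilon>) * X w) \<partial>M) \<le> exp (-\<epsilon>*(k + real N)) * E1"
        unfolding E1_def by (intro mult_left_mono) auto
      thus "callX M X k \<le> (\<Sum>n<N. exp (k + real n + 1) * tailX M X (k + real n))
           + exp (-\<epsilon>*(k + real N)) * E1"
        using call_upper[OF P Xm e int, of k N] by linarith
    qed
    show "\<And>k y. k \<le> y \<Longrightarrow> callX M X y \<le> callX M X k"
      using call_anti[OF P Xm e int] by blast
  qed (use assms in auto)
qed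

end
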